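(* Let $F$ be a formal group law over a ring $R$ such that the $n$-series $[n]_F(t)\in R[[t]]$ is not a zero-divisor for any $n>0$. Then the GNS $s(n)=[n]_F(t)$ on $R[[t]]$ is Lucasian: $s(a+b)\equiv s(a)+s(b)\bmod s(a)s(b)$ for all $a,b\in\mathbf N$.
   Context: A generalized $n$-series (GNS) over a ring $D$ is a function $s\colon\mathbf N\to D$ with $s(0)=0$, $s(n)$ a non-zero-divisor for $n>0$, and $s(n-k)\mid s(n)-s(k)$ for all $n>k>0$. A GNS $s$ is Lucasian if $s(a+b)\equiv s(a)+s(b)\bmod s(a)s(b)$ for all $a,b$. Here $[n]_F(t)$ is the $n$-fold formal sum of $t$ with itself. *)

theory Defs
  imports "HOL-Computational_Algebra.Formal_Power_Series"
begin

text \<open>A formal power series F(x,y) in R[[x,y]] is represented by its coefficient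
  array C, i.e. F(x,y) = sum over i j of C i j x^i y^j.
  Power series in three variables x,y,z are represented by coefficient functions
  nat => nat => nat => 'a (coefficient of x^a y^b z^c).\<close>

type_synonym 'a ps3 = "nat \<Rightarrow> nat \<Rightarrow> nat \<Rightarrow> 'a"

definition ps3_mult :: "'a::comm_ring_1 ps3 \<Rightarrow> 'a ps3 \<Rightarrow> 'a ps3" where
  "ps3_mult f g = (\<lambda>a b c. \<Sum>a1\<le>a. \<Sum>b1\<le>b. \<Sum>c1\<le>c.
      f a1 b1 c1 * g (a - a1) (b - b1) (c - c1))"

definition ps3_one :: "'a::comm_ring_1 ps3" where
  "ps3_one = (\<lambda>a b c. if a = 0 \<and> b = 0 \<and> c = 0 then 1 else 0)"

primrec ps3_pow :: "'a::comm_ring_1 ps3 \<Rightarrow> nat \<Rightarrow> 'a ps3" where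
  "ps3_pow f 0 = ps3_one"
| "ps3_pow f (Suc n) = ps3_mult f (ps3_pow f n)"

definition ps3_X :: "'a::comm_ring_1 ps3" where
  "ps3_X = (\<lambda>a b c. if a = 1 \<and> b = 0 \<and> c = 0 then 1 else 0)"
definition ps3_Y :: "'a::comm_ring_1 ps3" where
  "ps3_Y = (\<lambda>a b c. if a = 0 \<and> b = 1 \<and> c = 0 then 1 else 0)"
definition ps3_Z :: "'a::comm_ring_1 ps3" where
  "ps3_Z = (\<lambda>a b c. if a = 0 \<and> b = 0 \<and> c = 1 then 1 else 0)"

text \<open>Substitution F(G,H) of three-variable series G, H without constant term into
  the two-variable series with coefficients C (only monomials of total degree
  at most a+b+c can contribute to the coefficient of x^a y^b z^c).\<close>
definition ps3_subst :: "(nat \<Rightarrow> nat \<Rightarrow> 'a::comm_ring_1) \<Rightarrow> 'a ps3 \<Rightarrow> 'a ps3 \<Rightarrow> 'a ps3" where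
  "ps3_subst C G H = (\<lambda>a b c. \<Sum>i\<le>a+b+c. \<Sum>j\<le>a+b+c.
      C i j * ps3_mult (ps3_pow G i) (ps3_pow H j) a b c)"

definition formal_group_law :: "(nat \<Rightarrow> nat \<Rightarrow> 'a::comm_ring_1) \<Rightarrow> bool" where
  "formal_group_law C \<longleftrightarrow>
     (\<forall>i. C i 0 = (if i = 1 then 1 else 0)) \<and>
     (\<forall>j. C 0 j = (if j = 1 then 1 else 0)) \<and>
     (\<forall>i j. C i j = C j i) \<and>
     ps3_subst C (ps3_subst C ps3_X ps3_Y) ps3_Z = ps3_subst C ps3_X (ps3_subst C ps3_Y ps3_Z)"

text \<open>F(f,g) for f, g in R[[t]] with zero constant term.\<close>
definition fgl_apply :: "(nat \<Rightarrow> nat \<Rightarrow> 'a::comm_ring_1) \<Rightarrow> 'a fps \<Rightarrow> 'a fps \<Rightarrow> 'a fps" where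
  "fgl_apply C f g = Abs_fps (\<lambda>k. \<Sum>i\<le>k. \<Sum>j\<le>k. C i j * fps_nth (f ^ i * g ^ j) k)"

primrec fgl_nseries :: "(nat \<Rightarrow> nat \<Rightarrow> 'a::comm_ring_1) \<Rightarrow> nat \<Rightarrow> 'a fps" where
  "fgl_nseries C 0 = 0"
| "fgl_nseries C (Suc n) = fgl_apply C (fgl_nseries C n) fps_X"

definition zero_divisor_free_elem :: "'a::comm_ring_1 \<Rightarrow> bool" where
  "zero_divisor_free_elem x \<longleftrightarrow> (\<forall>y. x * y = 0 \<longrightarrow> y = 0)"

definition gns :: "(nat \<Rightarrow> 'a::comm_ring_1) \<Rightarrow> bool" where
  "gns s \<longleftrightarrow> s 0 = 0 \<and> (\<forall>n>0. zero_divisor_free_elem (s n)) \<and>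
     (\<forall>n k. 0 < k \<and> k < n \<longrightarrow> s (n - k) dvd s n - s k)"

definition lucasian :: "(nat \<Rightarrow> 'a::comm_ring_1) \<Rightarrow> bool" where
  "lucasian s \<longleftrightarrow> gns s \<and> (\<forall>a b. s a * s b dvd s (a + b) - (s a + s b))"

end

theory Submission
  imports Defs
begin
unbundle fps_syntax

lemma pow_vanish:
  fixes g :: "'a::comm_ring_1 fps"
  assumes "g $ 0 = 0" "k < b" shows "(q * g ^ b) $ k = 0"
  unfolding fps_mult_nth
  by (intro sum.neutral ballI) (use assms startsby_zero_power_prefix[OF assms(1)] in auto)

definition rhom :: "('a::comm_ring_1 \<Rightarrow> 'b::comm_ring_1) \<Rightarrow> bool" where
  "rhom \<phi> \<longleftrightarrow> (\<forall>x y. \<phi> (x + y) = \<phi> x + \<phi> y) \<and> (\<forall>x y. \<phi> (x * y) = \<phi> x * \<phi> y) \<and> \<phi> 1 = 1"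

lemma rhom_add: "rhom \<phi> \<Longrightarrow> \<phi> (x + y) = \<phi> x + \<phi> y" by (simp add: rhom_def)
lemma rhom_mult: "rhom \<phi> \<Longrightarrow> \<phi> (x * y) = \<phi> x * \<phi> y" by (simp add: rhom_def)
lemma rhom_one: "rhom \<phi> \<Longrightarrow> \<phi> 1 = 1" by (simp add: rhom_def)
lemma rhom_zero: "rhom \<phi> \<Longrightarrow> \<phi> 0 = 0"
proof -
  assume h: "rhom \<phi>"
  have "\<phi> (0 + 0) = \<phi> 0 + \<phi> 0" by (rule rhom_add[OF h])
  then show ?thesis by simp
qed
lemma rhom_sum: "rhom \<phi> \<Longrightarrow> \<phi> (sum f A) = (\<Sum>x\<in>A. \<phi> (f x))"
  by (induction A rule: infinite_finite_induct) (auto simp: rhom_zero rhom_add)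
lemma rhom_power: "rhom \<phi> \<Longrightarrow> \<phi> (x ^ n) = \<phi> x ^ n"
  by (induction n) (auto simp: rhom_one rhom_mult)
lemma rhom_diff: "rhom \<phi> \<Longrightarrow> \<phi> (x - y) = \<phi> x - \<phi> y"
proof -
  assume h: "rhom \<phi>"
  have "\<phi> x = \<phi> ((x - y) + y)" by simp
  also have "\<dots> = \<phi> (x - y) + \<phi> y" by (rule rhom_add[OF h])
  finally show ?thesis by simp
qed
lemma rhom_comp: "rhom \<phi> \<Longrightarrow> rhom \<psi> \<Longrightarrow> rhom (\<phi> \<circ> \<psi>)"
  by (simp add: rhom_def)

lemma rhom_fps_const: "rhom fps_const"
  by (simp add: rhom_def)

definition fmap :: "('a \<Rightarrow> 'b) \<Rightarrow> 'a fps \<Rightarrow> 'b fps" where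
  "fmap \<phi> P = Abs_fps (\<lambda>n. \<phi> (P $ n))"

lemma fmap_nth[simp]: "fmap \<phi> P $ n = \<phi> (P $ n)" by (simp add: fmap_def)

lemma rhom_fmap: assumes h: "rhom \<phi>" shows "rhom (fmap \<phi>)"
  unfolding rhom_def
proof (intro conjI allI)
  fix x y :: "'a fps"
  show "fmap \<phi> (x + y) = fmap \<phi> x + fmap \<phi> y"
    by (rule fps_ext) (simp add: rhom_add[OF h])
  show "fmap \<phi> (x * y) = fmap \<phi> x * fmap \<phi> y"
    by (rule fps_ext) (simp add: fps_mult_nth rhom_sum[OF h] rhom_mult[OF h])
  show "fmap \<phi> 1 = 1"
    by (rule fps_ext) (simp add: fps_one_nth rhom_one[OF h] rhom_zero[OF h])
qed

lemma fmap_X: "rhom \<phi> \<Longrightarrow> fmap \<phi> fps_X = fps_X"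
  by (rule fps_ext) (simp add: fps_X_def rhom_one rhom_zero)
lemma fmap_const: "\<phi> 0 = 0 \<Longrightarrow> fmap \<phi> (fps_const c) = fps_const (\<phi> c)"
  by (rule fps_ext) simp

lemma fmap_zero[simp]: "\<phi> 0 = 0 \<Longrightarrow> fmap \<phi> 0 = 0"
  by (rule fps_ext) simp

definition ev :: "'a::comm_ring_1 fps \<Rightarrow> 'a fps fps \<Rightarrow> 'a fps" where
  "ev g Q = Abs_fps (\<lambda>k. \<Sum>b\<le>k. (Q $ b * g ^ b) $ k)"

lemma ev_nth: "ev g Q $ k = (\<Sum>b\<le>k. (Q $ b * g ^ b) $ k)"
  by (simp add: ev_def)

lemma ev_zero[simp]: "ev g 0 = 0"
  by (rule fps_ext) (simp add: ev_nth)

lemma ev_trunc: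
  assumes "g $ 0 = 0" "k \<le> N"
  shows "ev g Q $ k = (\<Sum>b\<le>N. Q $ b * g ^ b) $ k"
  unfolding ev_nth fps_sum_nth
  by (rule sum.mono_neutral_left) (use assms in \<open>auto intro!: pow_vanish\<close>)

lemma ev_local:
  assumes "\<And>b m. b \<le> k \<Longrightarrow> m \<le> k \<Longrightarrow> Q $ b $ m = Q' $ b $ m"
  shows "ev g Q $ k = ev g Q' $ k"
  unfolding ev_nth fps_mult_nth using assms
  by (intro sum.cong refl) auto

lemma ev_mult:
  fixes g :: "'a::comm_ring_1 fps"
  assumes g0: "g $ 0 = 0"
  shows "ev g (Q * R) = ev g Q * ev g R"
proof (rule fps_ext)
  fix k
  define t where "t = (\<lambda>i j. Q $ i * R $ j * g ^ (i + j))"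
  have "(ev g Q * ev g R) $ k = ((\<Sum>b\<le>k. Q $ b * g ^ b) * (\<Sum>b\<le>k. R $ b * g ^ b)) $ k"
    unfolding fps_mult_nth
    by (intro sum.cong refl) (simp add: ev_trunc[OF g0, where N=k])
  also have "(\<Sum>b\<le>k. Q $ b * g ^ b) * (\<Sum>b\<le>k. R $ b * g ^ b) = (\<Sum>p\<in>{..k}\<times>{..k}. t (fst p) (snd p))"
    unfolding sum_product t_def
    by (simp add: power_add algebra_simps sum.cartesian_product case_prod_beta)
  also have "(\<Sum>p\<in>{..k}\<times>{..k}. t (fst p) (snd p)) $ k = (\<Sum>p\<in>{(i,j). i + j \<le> k}. t (fst p) (snd p)) $ k"
    unfolding fps_sum_nth
    by (rule sum.mono_neutral_right) (auto simp: t_def, metis not_le pow_vanish[OF g0])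
  also have "(\<Sum>p\<in>{(i,j). i + j \<le> k}. t (fst p) (snd p)) = (\<Sum>(i,j)\<in>{(i,j). i + j \<le> k}. t i j)"
    by (simp add: case_prod_beta)
  also have "\<dots> = (\<Sum>B\<le>k. \<Sum>i\<le>B. t i (B - i))"
    by (rule sum.triangle_reindex_eq)
  also have "\<dots> = (\<Sum>B\<le>k. (Q * R) $ B * g ^ B)"
    by (intro sum.cong refl) (simp add: t_def fps_mult_nth atMost_atLeast0 sum_distrib_right)
  also have "(\<Sum>B\<le>k. (Q * R) $ B * g ^ B) $ k = ev g (Q * R) $ k"
    by (rule ev_trunc[OF g0, symmetric]) simp
  finally show "ev g (Q * R) $ k = (ev g Q * ev g R) $ k" by simp
qed

lemma rhom_ev: assumes g0: "g $ 0 = 0" shows "rhom (ev g)"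
  unfolding rhom_def
proof (intro conjI allI)
  fix x y
  show "ev g (x + y) = ev g x + ev g y"
    by (rule fps_ext) (simp add: ev_nth distrib_right sum.distrib)
  show "ev g (x * y) = ev g x * ev g y" by (rule ev_mult[OF g0])
  show "ev g 1 = 1"
  proof (rule fps_ext)
    fix k
    have "ev g 1 $ k = (\<Sum>b\<le>k. if b = 0 then (1::'a fps) $ k else 0)"
      unfolding ev_nth by (intro sum.cong refl) (simp add: fps_one_nth)
    also have "\<dots> = (1::'a fps) $ k" by simp
    finally show "ev g 1 $ k = 1 $ k" .
  qed
qed

lemma ev_X: "g $ 0 = 0 \<Longrightarrow> ev g fps_X = g"
proof (rule fps_ext)
  fix k assume g0: "g $ 0 = 0"
  show "ev g fps_X $ k = g $ k"
  proof (cases k)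
    case 0 then show ?thesis using g0 by (simp add: ev_nth)
  next
    case (Suc m)
    have "ev g fps_X $ k = (\<Sum>b\<le>k. if b = 1 then g $ k else 0)"
      unfolding ev_nth by (intro sum.cong refl) (simp add: fps_X_def)
    also have "\<dots> = g $ k" using Suc by simp
    finally show ?thesis .
  qed
qed

lemma ev_const: "ev g (fps_const c) = c"
proof (rule fps_ext)
  fix k
  have "ev g (fps_const c) $ k = (\<Sum>b\<le>k. if b = 0 then c $ k else 0)"
    unfolding ev_nth by (intro sum.cong refl) simp
  also have "\<dots> = c $ k" by simp
  finally show "ev g (fps_const c) $ k = c $ k" .
qed


definition to3 :: "'a::comm_ring_1 ps3 \<Rightarrow> 'a fps fps fps" where
  "to3 P = Abs_fps (\<lambda>a. Abs_fps (\<lambda>b. Abs_fps (\<lambda>c. P a b c)))"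

lemma to3_nth[simp]: "to3 P $ a $ b $ c = P a b c"
  by (simp add: to3_def)

lemma fps_ext3:
  fixes T T' :: "'a fps fps fps"
  assumes "\<And>a b c. T $ a $ b $ c = T' $ a $ b $ c" shows "T = T'"
  using assms by (intro fps_ext) auto

lemma to3_mult: "to3 (ps3_mult P Q) = to3 P * to3 Q"
  by (rule fps_ext3) (simp add: fps_mult_nth fps_sum_nth atLeast0AtMost ps3_mult_def)

lemma to3_one: "to3 ps3_one = 1"
  by (rule fps_ext3) (simp add: fps_one_nth ps3_one_def)

lemma to3_pow: "to3 (ps3_pow P n) = to3 P ^ n"
  by (induction n) (simp_all add: to3_one to3_mult)

lemma to3_X: "to3 ps3_X = fps_X"
  by (rule fps_ext3) (simp add: fps_X_def fps_one_nth ps3_X_def)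

lemma to3_Y: "to3 ps3_Y = fps_const fps_X"
  by (rule fps_ext3) (simp add: fps_X_def ps3_Y_def)

lemma to3_Z: "to3 ps3_Z = fps_const (fps_const fps_X)"
  by (rule fps_ext3) (simp add: fps_X_def ps3_Z_def)

definition innerh :: "'a::comm_ring_1 fps \<Rightarrow> 'a fps \<Rightarrow> 'a fps" where
  "innerh h = ev h \<circ> fmap fps_const"
definition midg :: "'a::comm_ring_1 fps \<Rightarrow> 'a fps \<Rightarrow> 'a fps fps \<Rightarrow> 'a fps" where
  "midg g h = ev g \<circ> fmap (innerh h)"
definition Ev :: "'a::comm_ring_1 fps \<Rightarrow> 'a fps \<Rightarrow> 'a fps \<Rightarrow> 'a fps fps fps \<Rightarrow> 'a fps" where
  "Ev f g h = ev f \<circ> fmap (midg g h)"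

lemma rhom_innerh: "h $ 0 = 0 \<Longrightarrow> rhom (innerh h)"
  unfolding innerh_def by (intro rhom_comp rhom_ev rhom_fmap rhom_fps_const)
lemma rhom_midg: "g $ 0 = 0 \<Longrightarrow> h $ 0 = 0 \<Longrightarrow> rhom (midg g h)"
  unfolding midg_def by (intro rhom_comp rhom_ev rhom_fmap rhom_innerh)
lemma rhom_Ev: "f $ 0 = 0 \<Longrightarrow> g $ 0 = 0 \<Longrightarrow> h $ 0 = 0 \<Longrightarrow> rhom (Ev f g h)"
  unfolding Ev_def by (intro rhom_comp rhom_ev rhom_fmap rhom_midg)

lemma Ev_X: "f $ 0 = 0 \<Longrightarrow> g $ 0 = 0 \<Longrightarrow> h $ 0 = 0 \<Longrightarrow> Ev f g h fps_X = f"
  by (simp add: Ev_def fmap_X rhom_midg ev_X)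
lemma Ev_Y: "f $ 0 = 0 \<Longrightarrow> g $ 0 = 0 \<Longrightarrow> h $ 0 = 0 \<Longrightarrow> Ev f g h (fps_const fps_X) = g"
proof -
  assume f0: "f $ 0 = 0" and g0: "g $ 0 = 0" and h0: "h $ 0 = 0"
  have "Ev f g h (fps_const fps_X) = midg g h fps_X"
    by (simp add: Ev_def fmap_const rhom_zero[OF rhom_midg[OF g0 h0]] ev_const)
  also have "\<dots> = g" by (simp add: midg_def fmap_X[OF rhom_innerh[OF h0]] ev_X[OF g0])
  finally show ?thesis .
qed
lemma Ev_Z: "f $ 0 = 0 \<Longrightarrow> g $ 0 = 0 \<Longrightarrow> h $ 0 = 0 \<Longrightarrow> Ev f g h (fps_const (fps_const fps_X)) = h"
  by (simp add: Ev_def midg_def innerh_def o_def fmap_const ev_const fmap_X rhom_fps_const ev_X)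
lemma Ev_K: "Ev f g h (fps_const (fps_const (fps_const c))) = fps_const c"
  by (simp add: Ev_def midg_def innerh_def o_def fmap_const ev_const)

lemma Ev_local:
  assumes "\<And>a b c. a \<le> k \<Longrightarrow> b \<le> k \<Longrightarrow> c \<le> k \<Longrightarrow> T $ a $ b $ c = T' $ a $ b $ c"
  shows "Ev f g h T $ k = Ev f g h T' $ k"
  unfolding Ev_def o_def
proof (rule ev_local)
  fix a m assume am: "a \<le> k" "m \<le> k"
  show "fmap (midg g h) T $ a $ m = fmap (midg g h) T' $ a $ m"
    unfolding fmap_nth midg_def o_def
  proof (rule ev_local)
    fix b m' assume bm: "b \<le> m" "m' \<le> m"
    show "fmap (innerh h) (T $ a) $ b $ m' = fmap (innerh h) (T' $ a) $ b $ m'"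
      unfolding fmap_nth innerh_def o_def
      by (rule ev_local) (use am bm assms in auto)
  qed
qed

definition low :: "nat \<Rightarrow> 'a::comm_ring_1 ps3 \<Rightarrow> bool" where
  "low n P \<longleftrightarrow> (\<forall>a b c. a + b + c < n \<longrightarrow> P a b c = 0)"

lemma low_mult_left: "low n P \<Longrightarrow> low n (ps3_mult P Q)"
  unfolding low_def ps3_mult_def
  by (auto intro!: sum.neutral)

lemma low_mult_right: "low n Q \<Longrightarrow> low n (ps3_mult P Q)"
  unfolding low_def ps3_mult_def
  by (auto intro!: sum.neutral)

lemma low_mult_suc: "low 1 P \<Longrightarrow> low m Q \<Longrightarrow> low (Suc m) (ps3_mult P Q)"
  unfolding low_def ps3_mult_def
proof (intro allI impI sum.neutral ballI)
  fix a b c a1 b1 c1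
  assume P: "\<forall>a b c. a + b + c < 1 \<longrightarrow> P a b c = 0" and Q: "\<forall>a b c. a + b + c < m \<longrightarrow> Q a b c = 0"
    and s: "a + b + c < Suc m" and i: "a1 \<in> {..a}" "b1 \<in> {..b}" "c1 \<in> {..c}"
  show "P a1 b1 c1 * Q (a - a1) (b - b1) (c - c1) = 0"
  proof (cases "a1 + b1 + c1 = 0")
    case True then show ?thesis using P by auto
  next
    case False
    then have "(a - a1) + (b - b1) + (c - c1) < m" using s i by auto
    then show ?thesis using Q by auto
  qed
qed

lemma low_pow: "G 0 0 0 = 0 \<Longrightarrow> low n (ps3_pow G n)"
proof (induction n)
  case 0 then show ?case by (simp add: low_def)
next
  case (Suc n)
  have "low 1 G" using Suc.prems by (simp add: low_def)
  then show ?case using Suc by (simp add: low_mult_suc)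
qed

lemma dsum_ext:
  fixes F :: "nat \<Rightarrow> nat \<Rightarrow> 'b::comm_monoid_add"
  assumes "M \<le> N" "\<And>i j. i \<le> N \<Longrightarrow> j \<le> N \<Longrightarrow> M < i \<or> M < j \<Longrightarrow> F i j = 0"
  shows "(\<Sum>i\<le>N. \<Sum>j\<le>N. F i j) = (\<Sum>i\<le>M. \<Sum>j\<le>M. F i j)"
proof -
  have "(\<Sum>i\<le>N. \<Sum>j\<le>N. F i j) = (\<Sum>i\<le>N. \<Sum>j\<le>M. F i j)"
    by (intro sum.cong refl sum.mono_neutral_right) (use assms in auto)
  also have "\<dots> = (\<Sum>i\<le>M. \<Sum>j\<le>M. F i j)"
    by (intro sum.mono_neutral_right) (use assms in \<open>auto intro!: sum.neutral\<close>)
  finally show ?thesis .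
qed

lemma subst_ext:
  assumes G0: "G 0 0 0 = 0" and H0: "H 0 0 0 = 0" and N: "a + b + c \<le> N"
  shows "ps3_subst C G H a b c =
    (\<Sum>i\<le>N. \<Sum>j\<le>N. C i j * ps3_mult (ps3_pow G i) (ps3_pow H j) a b c)"
  unfolding ps3_subst_def
proof (rule dsum_ext[symmetric, OF N])
  fix i j assume "a + b + c < i \<or> a + b + c < j"
  then show "C i j * ps3_mult (ps3_pow G i) (ps3_pow H j) a b c = 0"
  proof
    assume "a + b + c < i"
    then show ?thesis using low_mult_left[OF low_pow[of G i, OF G0]] by (auto simp: low_def)
  next
    assume "a + b + c < j"
    then show ?thesis using low_mult_right[OF low_pow[of H j, OF H0]] by (auto simp: low_def)
  qed
qed

definition K3 :: "'a::comm_ring_1 \<Rightarrow> 'a fps fps fps" where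
  "K3 c = fps_const (fps_const (fps_const c))"

lemma TS_nth:
  "(\<Sum>i\<le>N. \<Sum>j\<le>N. K3 (C i j) * to3 G ^ i * to3 H ^ j) $ a $ b $ c =
   (\<Sum>i\<le>N. \<Sum>j\<le>N. C i j * ps3_mult (ps3_pow G i) (ps3_pow H j) a b c)"
  by (simp add: fps_sum_nth K3_def mult.assoc to3_pow[symmetric] to3_mult[symmetric])

lemma Ev0:
  assumes "f $ 0 = 0" "g $ 0 = 0" "h $ 0 = 0" "G 0 0 0 = 0"
  shows "Ev f g h (to3 G) $ 0 = 0"
proof -
  have "Ev f g h (to3 G) $ 0 = Ev f g h 0 $ 0"
    by (rule Ev_local) (use assms in auto)
  then show ?thesis using rhom_zero[OF rhom_Ev[OF assms(1-3)]] by simp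
qed

lemma Ev_subst:
  assumes f0: "f $ 0 = 0" and g0: "g $ 0 = 0" and h0: "h $ 0 = 0"
    and G0: "G 0 0 0 = 0" and H0: "H 0 0 0 = 0"
  shows "Ev f g h (to3 (ps3_subst C G H)) = fgl_apply C (Ev f g h (to3 G)) (Ev f g h (to3 H))"
proof (rule fps_ext)
  fix k
  define EG where "EG = Ev f g h (to3 G)"
  define EH where "EH = Ev f g h (to3 H)"
  have EG0: "EG $ 0 = 0" unfolding EG_def by (rule Ev0[where G=G, OF f0 g0 h0 G0])
  have EH0: "EH $ 0 = 0" unfolding EH_def by (rule Ev0[where G=H, OF f0 g0 h0 H0])
  have r: "rhom (Ev f g h)" by (rule rhom_Ev[OF f0 g0 h0])
  have "Ev f g h (to3 (ps3_subst C G H)) $ k =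
        Ev f g h (\<Sum>i\<le>3*k. \<Sum>j\<le>3*k. K3 (C i j) * to3 G ^ i * to3 H ^ j) $ k"
    by (rule Ev_local) (simp add: TS_nth subst_ext[where G=G and H=H, OF G0 H0])
  also have "\<dots> = (\<Sum>i\<le>3*k. \<Sum>j\<le>3*k. fps_const (C i j) * EG ^ i * EH ^ j) $ k"
    by (simp add: rhom_sum[OF r] rhom_mult[OF r] rhom_power[OF r] K3_def Ev_K EG_def EH_def)
  also have "\<dots> = (\<Sum>i\<le>3*k. \<Sum>j\<le>3*k. C i j * (EG ^ i * EH ^ j) $ k)"
    by (simp add: fps_sum_nth mult.assoc)
  also have "\<dots> = (\<Sum>i\<le>k. \<Sum>j\<le>k. C i j * (EG ^ i * EH ^ j) $ k)"
  proof (rule dsum_ext)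
    fix i j assume "k < i \<or> k < j"
    then show "C i j * (EG ^ i * EH ^ j) $ k = 0"
    proof
      assume "k < i"
      then show ?thesis using pow_vanish[OF EG0, of k i "EH ^ j"] by (simp add: mult.commute)
    next
      assume "k < j"
      then show ?thesis using pow_vanish[OF EH0, of k j "EG ^ i"] by simp
    qed
  qed simp
  also have "\<dots> = fgl_apply C EG EH $ k" by (simp add: fgl_apply_def)
  finally show "Ev f g h (to3 (ps3_subst C G H)) $ k = fgl_apply C EG EH $ k" .
qed


lemma fgl_facts:
  assumes "formal_group_law C"
  shows "C i 0 = (if i = 1 then 1 else 0)" "C 0 j = (if j = 1 then 1 else 0)"
    and "ps3_subst C (ps3_subst C ps3_X ps3_Y) ps3_Z = ps3_subst C ps3_X (ps3_subst C ps3_Y ps3_Z)"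
  using assms by (auto simp: formal_group_law_def)

lemma mono_XY: "ps3_mult (ps3_pow ps3_X i) (ps3_pow ps3_Y j) a b c =
   (if a = i then if b = j then if c = 0 then 1 else 0 else 0 else 0)"
proof -
  have "ps3_mult (ps3_pow ps3_X i) (ps3_pow ps3_Y j) a b c =
        (fps_X ^ i * fps_const (fps_X ^ j)) $ a $ b $ c"
    by (metis to3_mult to3_nth to3_pow to3_X to3_Y fps_const_power)
  also have "\<dots> = (if a = i then if b = j then if c = 0 then 1 else 0 else 0 else 0)"
    by (simp add: fps_X_power_mult_nth fps_one_nth)
  finally show ?thesis .
qed

lemma dsum_delta:
  assumes "a \<in> A" "b \<in> B" "finite A" "finite B"
  shows "(\<Sum>i\<in>A. \<Sum>j\<in>B. if i = a then if j = b then v i j else 0 else 0) = v a b"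
proof -
  have "(\<Sum>i\<in>A. \<Sum>j\<in>B. if i = a then if j = b then v i j else 0 else 0) =
        (\<Sum>i\<in>A. if i = a then (\<Sum>j\<in>B. if j = b then v i j else 0) else 0)"
    by (intro sum.cong) auto
  then show ?thesis using assms by simp
qed

lemma subst_XY: "ps3_subst C ps3_X ps3_Y a b c = (if c = 0 then C a b else 0)"
proof -
  have "ps3_subst C ps3_X ps3_Y a b c =
     (\<Sum>i\<le>a+b+c. \<Sum>j\<le>a+b+c. if i = a then if j = b then if c = 0 then C i j else 0 else 0 else 0)"
    unfolding ps3_subst_def mono_XY by (intro sum.cong refl) auto
  also have "\<dots> = (if c = 0 then C a b else 0)"
    by (rule dsum_delta[where v="\<lambda>i j. if c = 0 then C i j else 0"]) auto
  finally show ?thesis .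
qed

definition Dps :: "(nat \<Rightarrow> nat \<Rightarrow> 'a::comm_ring_1) \<Rightarrow> 'a ps3" where
  "Dps C = (\<lambda>a b c. if c = 0 then C (Suc a) (Suc b) else 0)"

lemma to3_decomp:
  assumes "formal_group_law C"
  shows "to3 (ps3_subst C ps3_X ps3_Y) =
    fps_X * (fps_const fps_X * to3 (Dps C)) + fps_X + fps_const fps_X"
proof (rule fps_ext3)
  fix a b c
  note F = fgl_facts[OF assms]
  show "to3 (ps3_subst C ps3_X ps3_Y) $ a $ b $ c =
    (fps_X * (fps_const fps_X * to3 (Dps C)) + fps_X + fps_const fps_X) $ a $ b $ c"
    unfolding to3_nth subst_XY
    by (cases a; cases b) (auto simp: Dps_def fps_one_nth F)
qed

lemma fgl_decomp:
  assumes C: "formal_group_law C" and f0: "f $ 0 = 0" and g0: "g $ 0 = 0"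
  shows "fgl_apply C f g = f * g * Ev f g 0 (to3 (Dps C)) + f + g"
proof -
  have z: "(0::'a fps) $ 0 = 0" by simp
  have r: "rhom (Ev f g 0)" by (rule rhom_Ev[OF f0 g0 z])
  have "fgl_apply C f g = fgl_apply C (Ev f g 0 (to3 ps3_X)) (Ev f g 0 (to3 ps3_Y))"
    by (simp add: to3_X to3_Y Ev_X[OF f0 g0 z] Ev_Y[OF f0 g0 z])
  also have "\<dots> = Ev f g 0 (to3 (ps3_subst C ps3_X ps3_Y))"
    by (rule Ev_subst[symmetric, OF f0 g0 z]) (simp_all add: ps3_X_def ps3_Y_def)
  also have "\<dots> = f * g * Ev f g 0 (to3 (Dps C)) + f + g"
    by (simp add: to3_decomp[OF C] rhom_add[OF r] rhom_mult[OF r] Ev_X[OF f0 g0 z] Ev_Y[OF f0 g0 z] mult.assoc)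
  finally show ?thesis .
qed

lemma fgl_apply_0: "formal_group_law C \<Longrightarrow> fgl_apply C f g $ 0 = 0"
  by (simp add: fgl_apply_def fgl_facts)

lemma fgl_assoc:
  assumes C: "formal_group_law C" and f0: "f $ 0 = 0" and g0: "g $ 0 = 0" and h0: "h $ 0 = 0"
  shows "fgl_apply C (fgl_apply C f g) h = fgl_apply C f (fgl_apply C g h)"
proof -
  note F = fgl_facts[OF C]
  have T0: "ps3_subst C ps3_X ps3_Y 0 0 0 = 0" "ps3_subst C ps3_Y ps3_Z 0 0 0 = 0"
    by (simp_all add: ps3_subst_def F)
  have X0: "ps3_X 0 0 0 = (0::'a)" "ps3_Y 0 0 0 = (0::'a)" "ps3_Z 0 0 0 = (0::'a)"
    by (simp_all add: ps3_X_def ps3_Y_def ps3_Z_def)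
  note E = Ev_X[OF f0 g0 h0] Ev_Y[OF f0 g0 h0] Ev_Z[OF f0 g0 h0] to3_X to3_Y to3_Z
  have "fgl_apply C (fgl_apply C f g) h = Ev f g h (to3 (ps3_subst C (ps3_subst C ps3_X ps3_Y) ps3_Z))"
    by (simp add: Ev_subst[OF f0 g0 h0] T0 X0 E)
  also have "\<dots> = Ev f g h (to3 (ps3_subst C ps3_X (ps3_subst C ps3_Y ps3_Z)))"
    by (simp add: F(3))
  also have "\<dots> = fgl_apply C f (fgl_apply C g h)"
    by (simp add: Ev_subst[OF f0 g0 h0] T0 X0 E)
  finally show ?thesis .
qed


lemma nseries_0: "formal_group_law C \<Longrightarrow> fgl_nseries C n $ 0 = 0"
  by (cases n) (simp_all add: fgl_apply_0)

lemma nseries_add: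
  assumes C: "formal_group_law C"
  shows "fgl_nseries C (a + b) = fgl_apply C (fgl_nseries C a) (fgl_nseries C b)"
proof (induction b)
  case 0
  show ?case using fgl_decomp[OF C nseries_0[OF C, of a], of 0] by simp
next
  case (Suc b)
  have "fgl_nseries C (a + Suc b) = fgl_apply C (fgl_nseries C (a + b)) fps_X" by simp
  also have "\<dots> = fgl_apply C (fgl_apply C (fgl_nseries C a) (fgl_nseries C b)) fps_X"
    by (simp add: Suc.IH)
  also have "\<dots> = fgl_apply C (fgl_nseries C a) (fgl_apply C (fgl_nseries C b) fps_X)"
    by (rule fgl_assoc[OF C nseries_0[OF C] nseries_0[OF C]]) simp
  also have "\<dots> = fgl_apply C (fgl_nseries C a) (fgl_nseries C (Suc b))" by simp
  finally show ?case .
qed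

theorem lemma5p10:
  fixes C :: "nat \<Rightarrow> nat \<Rightarrow> 'a::comm_ring_1"
  assumes "formal_group_law C"
    and "\<And>n. n > 0 \<Longrightarrow> zero_divisor_free_elem (fgl_nseries C n)"
  shows "lucasian (fgl_nseries C)"
proof -
  note C = assms(1)
  let ?s = "fgl_nseries C"
  have key: "?s (a + b) = ?s a * ?s b * Ev (?s a) (?s b) 0 (to3 (Dps C)) + ?s a + ?s b" for a b
    by (simp add: nseries_add[OF C] fgl_decomp[OF C nseries_0[OF C] nseries_0[OF C]])
  have luc: "?s a * ?s b dvd ?s (a + b) - (?s a + ?s b)" for a b
  proof (rule dvdI)
    show "?s (a + b) - (?s a + ?s b) = ?s a * ?s b * Ev (?s a) (?s b) 0 (to3 (Dps C))"
      by (subst key) simp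
  qed
  have g: "?s (n - k) dvd ?s n - ?s k" if "0 < k" "k < n" for n k
  proof -
    have n: "n = (n - k) + k" using that by simp
    have "?s n - ?s k = ?s (n - k) * (?s k * Ev (?s (n - k)) (?s k) 0 (to3 (Dps C)) + 1)"
      by (subst n, subst key) (simp add: algebra_simps)
    then show ?thesis by (rule dvdI)
  qed
  show ?thesis
    unfolding lucasian_def gns_def using assms(2) luc g by auto
qed

end
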